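(* Consider the DOMT construction described in the context. Let $t_0$ be the time of the last rejection, and suppose a "mini-drought" of length $k$ occurs, i.e. no hypotheses are rejected for $t\in(t_0,t_0+k]$. Assume the base procedure's threshold during the drought is governed by a monotonically decreasing sequence $\gamma_k=\Theta\!\big(\tfrac{1}{k\log^2k}\big)$ indexed by the time elapsed since the last discovery, so that at $t=t_0+k$, $\lambda_t^{\mathrm{base}}=\Theta(\gamma_k)$. Then, at $t=t_0+k$, $$\frac{\mathbb{E}[\lambda_t^{\mathrm{DOMT}}]}{\lambda_t^{\mathrm{base}}}=1+\Omega\!\left(\frac{k\log^2k}{\sqrt{t_0+k}}\right),$$ and if the drought is macroscopic, $k=\Theta(t)$, this relative advantage diverges at rate $\Omega(\sqrt t\,\log^2t)$.
   Context: A base online testing procedure produces thresholds $\lambda_t^{\mathrm{base}}\in[0,1]$ from its own (virtual) history. DOMT with exploration coefficient $\kappa>0$ and level $\alpha\in(0,1)$: let $Z_t$ be i.i.d. $\mathrm{Uniform}[0,1]$ independent of everything else, $\xi_t=\frac{\kappa\alpha}{\sqrt t}Z_t$ (so $\xi_t\sim\mathrm{Uniform}[0,\kappa\alpha/\sqrt t]$), and the DOMT threshold is $\lambda_t^{\mathrm{DOMT}}=\lambda_t^{\mathrm{base}}+\xi_t$ (clipped at $1$), where the base procedure's state is updated only using its own unperturbed decisions $\mathbf{1}\{p_t\le\lambda_t^{\mathrm{base}}\}$. *)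

theory Defs
  imports "HOL-Probability.Probability" "HOL-Library.Landau_Symbols"
begin

definition domt_threshold :: "real \<Rightarrow> real \<Rightarrow> nat \<Rightarrow> real \<Rightarrow> real \<Rightarrow> real" where
  "domt_threshold \<kappa> \<alpha> t b z = min (b + \<kappa> * \<alpha> / sqrt (real t) * z) 1"

text \<open>Expectation of the DOMT threshold over Z ~ Uniform[0,1] (independent of the
  history, so the base threshold b is held fixed).\<close>
definition expected_domt :: "real \<Rightarrow> real \<Rightarrow> nat \<Rightarrow> real \<Rightarrow> real" where
  "expected_domt \<kappa> \<alpha> t b =
     (\<integral>z. domt_threshold \<kappa> \<alpha> t b z \<partial>(uniform_measure lborel {0..1::real}))"

end

theory Submission imports Defs "HOL-Real_Asymp.Real_Asymp" begin

lemma unif01: "uniform_measure lborel {0..1::real} = density lborel (\<lambda>x. ennreal (indicator {0..1} x))"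
  unfolding uniform_measure_def by (intro density_cong) (auto simp: indicator_def)

lemma int_lin:
  fixes a b :: real and f :: "real \<Rightarrow> real"
  assumes f: "\<And>z. 0 \<le> z \<Longrightarrow> z \<le> 1 \<Longrightarrow> f z = b + a * z"
    and fm: "f \<in> borel_measurable borel"
  shows "(\<integral>z. f z \<partial>(uniform_measure lborel {0..1::real})) = b + a/2"
proof -
  have "(\<integral>z. f z \<partial>(uniform_measure lborel {0..1::real})) = (\<integral>z. indicator {0..1} z * f z \<partial>lborel)"
    unfolding unif01 by (subst integral_density) (auto simp: indicator_def fm)
  also have "\<dots> = (\<integral>z. indicator {0..1} z * (b + a*z) \<partial>lborel)"
    by (intro Bochner_Integration.integral_cong) (auto simp: indicator_def f)
  also have "\<dots> = (LINT z : {0..1} | lborel. b + a*z)" by (simp add: set_lebesgue_integral_def)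
  also have "\<dots> = integral {0..1} (\<lambda>z. b + a*z)"
  proof (rule set_borel_integral_eq_integral)
    have "integrable lborel (\<lambda>x. (b + a*x) * indicator {0..1} x)"
      by (rule borel_integrable_atLeastAtMost) (auto intro!: continuous_intros)
    then show "set_integrable lborel {0..1} (\<lambda>z. b + a*z)"
      by (simp add: set_integrable_def mult.commute)
  qed
  also have "\<dots> = b + a/2"
  proof -
    have "((\<lambda>z. b + a*z) has_integral ((b*1 + a*1^2/2) - (b*0 + a*0^2/2))) {0..1}"
      by (rule fundamental_theorem_of_calculus) (auto simp flip: has_real_derivative_iff_has_vector_derivative intro!: derivative_eq_intros)
    then show ?thesis by (simp add: integral_unique)
  qed
  finally show ?thesis .
qed

lemma exp_domt:
  assumes "0 \<le> \<kappa> * \<alpha> / sqrt (real t)" "b + \<kappa> * \<alpha> / sqrt (real t) \<le> 1"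
  shows "expected_domt \<kappa> \<alpha> t b = b + \<kappa> * \<alpha> / sqrt (real t) / 2"
  unfolding expected_domt_def domt_threshold_def
proof (rule int_lin)
  fix z :: real assume z: "0 \<le> z" "z \<le> 1"
  have "\<kappa> * \<alpha> / sqrt (real t) * z \<le> \<kappa> * \<alpha> / sqrt (real t)"
    using mult_left_le[OF z(2) assms(1)] .
  then show "min (b + \<kappa> * \<alpha> / sqrt (real t) * z) 1 = b + \<kappa> * \<alpha> / sqrt (real t) * z"
    using assms by simp
qed simp

lemma ev_lim1: "\<forall>\<^sub>F k in sequentially. (c::real) * (1 / (real k * (ln (real k))\<^sup>2)) \<le> 1/2"
proof -
  have "(\<lambda>k. c * (1 / (real k * (ln (real k))\<^sup>2))) \<longlonglongrightarrow> 0" by real_asymp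
  then have "\<forall>\<^sub>F k in sequentially. c * (1 / (real k * (ln (real k))\<^sup>2)) < 1/2" by (rule order_tendstoD(2)) simp
  then show ?thesis by (rule eventually_mono) simp
  qed

lemma ev_lim2: "\<forall>\<^sub>F k in sequentially. (c::real) / sqrt (real k) \<le> 1/2"
proof -
  have "(\<lambda>k. c / sqrt (real k)) \<longlonglongrightarrow> 0" by real_asymp
  then have "\<forall>\<^sub>F k in sequentially. c / sqrt (real k) < 1/2" by (rule order_tendstoD(2)) simp
  then show ?thesis by (rule eventually_mono) simp
  qed
lemma main_bound:
  fixes \<kappa> \<alpha> :: real and \<gamma> :: "nat \<Rightarrow> real" and lam_base :: "nat \<Rightarrow> nat \<Rightarrow> real"
  assumes kappa_pos: "\<kappa> > 0"
    and alpha: "0 < \<alpha>"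
    and base_range: "\<And>t0 k. 0 \<le> lam_base t0 k \<and> lam_base t0 k \<le> 1"
    and gamma_Theta: "\<gamma> \<in> \<Theta>(\<lambda>k. 1 / (real k * (ln (real k))\<^sup>2))"
    and base_Theta: "\<exists>c1 c2. c1 > 0 \<and> c2 > 0 \<and>
        (\<forall>\<^sub>F k in sequentially. \<forall>t0. c1 * \<gamma> k \<le> lam_base t0 k \<and> lam_base t0 k \<le> c2 * \<gamma> k)"
  shows "\<exists>C>0. \<exists>K\<ge>2. \<forall>k\<ge>K. \<forall>t0.
            expected_domt \<kappa> \<alpha> (t0 + k) (lam_base t0 k) / lam_base t0 k
              \<ge> 1 + C * (real k * (ln (real k))\<^sup>2) / sqrt (real (t0 + k))"
proof -
  define g where "g = (\<lambda>k::nat. 1 / (real k * (ln (real k))\<^sup>2))"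
  obtain c1 c2 where c12: "c1 > 0" "c2 > 0"
    and ev1: "\<forall>\<^sub>F k in sequentially. \<forall>t0. c1 * \<gamma> k \<le> lam_base t0 k \<and> lam_base t0 k \<le> c2 * \<gamma> k"
    using base_Theta by blast
  have "\<gamma> \<in> O(g)" using bigthetaD1[OF gamma_Theta] unfolding g_def .
  then obtain ch where ch: "ch > 0" and evh: "\<forall>\<^sub>F k in sequentially. norm (\<gamma> k) \<le> ch * norm (g k)"
    by (elim landau_o.bigE)
  have "\<gamma> \<in> \<Omega>(g)" using bigthetaD2[OF gamma_Theta] unfolding g_def .
  then obtain cl where cl: "cl > 0" and evl: "\<forall>\<^sub>F k in sequentially. norm (\<gamma> k) \<ge> cl * norm (g k)"
    by (elim landau_omega.bigE)
  have evg: "\<forall>\<^sub>F k in sequentially. c2 * ch * g k \<le> 1/2"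
    unfolding g_def by (rule ev_lim1)
  have eva: "\<forall>\<^sub>F k in sequentially. \<kappa> * \<alpha> / sqrt (real k) \<le> 1/2"
    by (rule ev_lim2)
  have ev2: "\<forall>\<^sub>F k in sequentially. k \<ge> (2::nat)"
    by (rule eventually_ge_at_top)
  have "\<forall>\<^sub>F k in sequentially. (\<forall>t0. c1 * \<gamma> k \<le> lam_base t0 k \<and> lam_base t0 k \<le> c2 * \<gamma> k)
     \<and> norm (\<gamma> k) \<le> ch * norm (g k) \<and> norm (\<gamma> k) \<ge> cl * norm (g k) \<and> c2 * ch * g k \<le> 1/2
     \<and> \<kappa> * \<alpha> / sqrt (real k) \<le> 1/2 \<and> k \<ge> 2"
    using ev1 evh evl evg eva ev2 by eventually_elim blast
  then obtain K0 where K0: "\<And>k. k \<ge> K0 \<Longrightarrow> (\<forall>t0. c1 * \<gamma> k \<le> lam_base t0 k \<and> lam_base t0 k \<le> c2 * \<gamma> k)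
     \<and> norm (\<gamma> k) \<le> ch * norm (g k) \<and> norm (\<gamma> k) \<ge> cl * norm (g k) \<and> c2 * ch * g k \<le> 1/2
     \<and> \<kappa> * \<alpha> / sqrt (real k) \<le> 1/2 \<and> k \<ge> 2"
    unfolding eventually_sequentially by blast
  define C where "C = \<kappa> * \<alpha> / (2 * c2 * ch)"
  have Cpos: "C > 0" unfolding C_def using kappa_pos alpha c12 ch by simp
  show ?thesis
  proof (intro exI[of _ C] conjI Cpos exI[of _ "max K0 2"] allI impI)
    show "max K0 2 \<ge> 2" by simp
    fix k t0 assume kK: "max K0 2 \<le> k"
    then have H: "(\<forall>t0. c1 * \<gamma> k \<le> lam_base t0 k \<and> lam_base t0 k \<le> c2 * \<gamma> k)
     \<and> norm (\<gamma> k) \<le> ch * norm (g k) \<and> norm (\<gamma> k) \<ge> cl * norm (g k) \<and> c2 * ch * g k \<le> 1/2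
     \<and> \<kappa> * \<alpha> / sqrt (real k) \<le> 1/2 \<and> k \<ge> 2" using K0 by simp
    define t where "t = t0 + k"
    define b where "b = lam_base t0 k"
    define a where "a = \<kappa> * \<alpha> / sqrt (real t)"
    define L where "L = ln (real k)"
    have k2: "real k \<ge> 2" using H by simp
    have Lpos: "L > 0" unfolding L_def using k2 by simp
    have gk: "g k = 1 / (real k * L^2)" unfolding g_def L_def by simp
    have gpos: "g k > 0" using gk Lpos k2 by simp
    have tk: "real t \<ge> real k" unfolding t_def by simp
    have spos: "sqrt (real t) > 0" using tk k2 by simp
    have apos: "a \<ge> 0" unfolding a_def using kappa_pos alpha spos by simp
    have "a \<le> \<kappa> * \<alpha> / sqrt (real k)" unfolding a_def
      using kappa_pos alpha k2 tk by (intro divide_left_mono) (auto intro: mult_pos_pos)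
    then have ale: "a \<le> 1/2" using H by linarith
    have bge: "b \<ge> c1 * \<gamma> k" and ble: "b \<le> c2 * \<gamma> k" using H unfolding b_def by auto
    have b0: "b \<ge> 0" unfolding b_def using base_range by simp
    have "0 \<le> c2 * \<gamma> k" using b0 ble by linarith
    then have gam0: "\<gamma> k \<ge> 0" using c12 by (simp add: zero_le_mult_iff)
    have "\<gamma> k \<ge> cl * g k" using H gam0 gpos by simp
    then have gampos: "\<gamma> k > 0" using cl gpos by (meson mult_pos_pos order_less_le_trans)
    have bpos: "b > 0" using bge c12 gampos by (meson mult_pos_pos order_less_le_trans)
    define B where "B = c2 * ch * g k"
    have "\<gamma> k \<le> ch * g k" using H gam0 gpos by simp
    then have bB: "b \<le> B" unfolding B_def using ble c12 by (smt (verit) mult.assoc mult_left_mono)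
    have Bhalf: "B \<le> 1/2" unfolding B_def using H by simp
    have E: "expected_domt \<kappa> \<alpha> t b = b + a/2"
      proof -
      have "b + a \<le> 1" using ale bB Bhalf by linarith
      then show ?thesis using apos unfolding a_def by (intro exp_domt)
    qed
    have e1: "expected_domt \<kappa> \<alpha> t b / b = 1 + a / (2*b)" using E bpos by (simp add: field_simps)
    have e2: "a / (2*b) \<ge> a / (2*B)"
      using apos bpos bB by (intro divide_left_mono) auto
    have e3: "a / (2*B) = C * (real k * L^2) / sqrt (real t)"
      unfolding a_def B_def C_def gk using c12 ch Lpos k2 spos by (simp add: field_simps)
    have "expected_domt \<kappa> \<alpha> t b / b \<ge> 1 + C * (real k * L^2) / sqrt (real t)"
      using e1 e2 e3 by linarith
    then show "expected_domt \<kappa> \<alpha> (t0 + k) (lam_base t0 k) / lam_base t0 k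
              \<ge> 1 + C * (real k * (ln (real k))\<^sup>2) / sqrt (real (t0 + k))"
      unfolding t_def b_def L_def by simp
  qed
qed
theorem lemma1:
  fixes \<kappa> \<alpha> :: real
    and \<gamma> :: "nat \<Rightarrow> real"
    and lam_base :: "nat \<Rightarrow> nat \<Rightarrow> real"
  assumes kappa_pos: "\<kappa> > 0"
    and alpha: "0 < \<alpha>" "\<alpha> < 1"
    and base_range: "\<And>t0 k. 0 \<le> lam_base t0 k \<and> lam_base t0 k \<le> 1"
    and gamma_dec: "decseq \<gamma>"
    and gamma_Theta: "\<gamma> \<in> \<Theta>(\<lambda>k. 1 / (real k * (ln (real k))\<^sup>2))"
    and base_Theta: "\<exists>c1 c2. c1 > 0 \<and> c2 > 0 \<and>
        (\<forall>\<^sub>F k in sequentially. \<forall>t0. c1 * \<gamma> k \<le> lam_base t0 k \<and> lam_base t0 k \<le> c2 * \<gamma> k)"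
  shows "(\<exists>C > 0. \<forall>\<^sub>F k in sequentially. \<forall>t0.
            expected_domt \<kappa> \<alpha> (t0 + k) (lam_base t0 k) / lam_base t0 k
              \<ge> 1 + C * (real k * (ln (real k))\<^sup>2) / sqrt (real (t0 + k)))
      \<and> (\<forall>c > 0. \<exists>C > 0. \<exists>T. \<forall>t0 k. T \<le> t0 + k \<and> c * real (t0 + k) \<le> real k \<longrightarrow>
            expected_domt \<kappa> \<alpha> (t0 + k) (lam_base t0 k) / lam_base t0 k
              \<ge> 1 + C * sqrt (real (t0 + k)) * (ln (real (t0 + k)))\<^sup>2)"
proof -
  obtain C K where C: "C > 0" and K2: "K \<ge> (2::nat)" and HK: "\<And>k t0. k \<ge> K \<Longrightarrow>
            expected_domt \<kappa> \<alpha> (t0 + k) (lam_base t0 k) / lam_base t0 k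
              \<ge> 1 + C * (real k * (ln (real k))\<^sup>2) / sqrt (real (t0 + k))"
    using main_bound[OF kappa_pos alpha(1) base_range gamma_Theta base_Theta] by blast
  have P1: "\<exists>C > 0. \<forall>\<^sub>F k in sequentially. \<forall>t0.
            expected_domt \<kappa> \<alpha> (t0 + k) (lam_base t0 k) / lam_base t0 k
              \<ge> 1 + C * (real k * (ln (real k))\<^sup>2) / sqrt (real (t0 + k))"
    using C HK by (intro exI[of _ C] conjI eventually_sequentiallyI[of K]) auto
  have P2: "\<exists>C > 0. \<exists>T. \<forall>t0 k. T \<le> t0 + k \<and> c * real (t0 + k) \<le> real k \<longrightarrow>
            expected_domt \<kappa> \<alpha> (t0 + k) (lam_base t0 k) / lam_base t0 k
              \<ge> 1 + C * sqrt (real (t0 + k)) * (ln (real (t0 + k)))\<^sup>2" if c: "c > 0" for c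
  proof (intro exI[of _ "C * c / 4"] conjI exI[of _ "nat \<lceil>real K / c + 1 / c^2 + 1\<rceil>"] allI impI)
    show "C * c / 4 > 0" using C c by simp
    fix t0 k assume A: "nat \<lceil>real K / c + 1 / c^2 + 1\<rceil> \<le> t0 + k \<and> c * real (t0 + k) \<le> real k"
    define t where "t = real (t0 + k)"
    have tT: "t \<ge> real K / c + 1 / c^2 + 1" using A unfolding t_def by linarith
    have Kc: "real K / c \<ge> 0" using c by simp
    have c2: "1 / c^2 \<ge> 0" by simp
    have t1: "t \<ge> 1" "t \<ge> 1 / c^2" "t \<ge> real K / c" using tT Kc c2 by linarith+
    have kct: "real k \<ge> c * t" using A unfolding t_def by simp
    have "c * t \<ge> real K" using t1(3) c by (simp add: field_simps)
    then have kK: "k \<ge> K" using kct by linarith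
    have H: "expected_domt \<kappa> \<alpha> (t0 + k) (lam_base t0 k) / lam_base t0 k
              \<ge> 1 + C * (real k * (ln (real k))\<^sup>2) / sqrt t" using HK[OF kK] unfolding t_def .
    have st: "sqrt t > 0" using t1 by simp
    have "c^2 * t \<ge> 1" using t1(2) c by (simp add: field_simps)
    then have "sqrt (c^2 * t) \<ge> 1" by simp
    then have "c * sqrt t \<ge> 1" using c by (simp add: real_sqrt_mult)
    then have le1: "1 * sqrt t \<le> (c * sqrt t) * sqrt t" using st by (intro mult_right_mono) auto
    have eq1: "c * t = (c * sqrt t) * sqrt t" using t1 by (simp add: mult.assoc)
    have "c * t \<ge> sqrt t" using le1 unfolding eq1 by simp
    then have "ln (c * t) \<ge> ln (sqrt t)" using st by (intro ln_mono) auto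
    moreover have "ln (real k) \<ge> ln (c * t)" using kct c t1 by (intro ln_mono) auto
    moreover have "ln (sqrt t) = ln t / 2" using t1 by (simp add: ln_sqrt)
    ultimately have lk: "ln (real k) \<ge> ln t / 2" by linarith
    have lt0: "ln t \<ge> 0" using t1 by simp
    have "(ln t / 2)^2 \<le> (ln (real k))^2" using lk lt0 by (intro power_mono) auto
    then have L2: "(ln (real k))^2 \<ge> (ln t)^2 / 4" by (simp add: power_divide)
    have "real k * (ln (real k))^2 \<ge> (c * t) * ((ln t)^2 / 4)"
      using kct L2 c t1 by (intro mult_mono) auto
    then have "C * (real k * (ln (real k))^2) / sqrt t \<ge> C * ((c * t) * ((ln t)^2 / 4)) / sqrt t"
      using C st by (intro divide_right_mono mult_left_mono) auto
    also have "C * ((c * t) * ((ln t)^2 / 4)) / sqrt t = C * c / 4 * sqrt t * (ln t)^2"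
      proof -
      have "t = sqrt t * sqrt t" using t1 by simp
      then show ?thesis using st by (simp add: field_simps)
    qed
    finally show "expected_domt \<kappa> \<alpha> (t0 + k) (lam_base t0 k) / lam_base t0 k
              \<ge> 1 + C * c / 4 * sqrt (real (t0 + k)) * (ln (real (t0 + k)))\<^sup>2"
      using H unfolding t_def by linarith
  qed
  show ?thesis using P1 P2 by blast
qed

end
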